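(* The perimeter $L^\dagger$ of the focus-inversive triangle is the same for all 3-periodics of $\mathcal{E}$, namely \[L^\dagger=\rho^2\,\frac{\sqrt{(8a^4+4a^2b^2+2b^4)\delta+8a^6+3a^2b^4+2b^6}}{a^2b^2}.\]
   Context: Let $a>b>0$ and let $\mathcal{E}$ be the ellipse $x^2/a^2+y^2/b^2=1$ (the elliptic billiard). Set $c=\sqrt{a^2-b^2}$, $\delta=\sqrt{a^4-a^2b^2+b^4}$, and let the foci be $f_1=(-c,0)$, $f_2=(c,0)$. A 3-periodic is a triangle $P_1P_2P_3$ with vertices on $\mathcal{E}$ such that at each vertex the normal to $\mathcal{E}$ bisects the angle formed by the two sides meeting at that vertex; these form a one-parameter family (there is one through every point of $\mathcal{E}$). Fix $\rho>0$. The focus-inversive triangle of a 3-periodic $P_1P_2P_3$ is the triangle with vertices $P_i^\dagger=f_1+(\rho/d_{1,i})^2(P_i-f_1)$, where $d_{1,i}=|P_i-f_1|$, i.e. the inversions of the $P_i$ in the circle of radius $\rho$ centered at $f_1$. *)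

theory Defs
  imports "HOL-Analysis.Analysis"
begin

(* Points of the plane are represented as complex numbers x + i y. *)

definition on_ellipse :: "real \<Rightarrow> real \<Rightarrow> complex \<Rightarrow> bool" where
  "on_ellipse a b P \<longleftrightarrow> (Re P)\<^sup>2 / a\<^sup>2 + (Im P)\<^sup>2 / b\<^sup>2 = 1"

definition ellipse_normal :: "real \<Rightarrow> real \<Rightarrow> complex \<Rightarrow> complex" where
  "ellipse_normal a b P = Complex (Re P / a\<^sup>2) (Im P / b\<^sup>2)"

definition cross2 :: "complex \<Rightarrow> complex \<Rightarrow> real" where
  "cross2 u v = Re u * Im v - Im u * Re v"

(* at vertex P with neighbours Q, R, the normal line bisects the angle QPR:
   the sum of the unit vectors from P towards Q and R is parallel to the normal *)
definition normal_bisects :: "real \<Rightarrow> real \<Rightarrow> complex \<Rightarrow> complex \<Rightarrow> complex \<Rightarrow> bool" where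
  "normal_bisects a b P Q R \<longleftrightarrow>
     cross2 (ellipse_normal a b P) ((Q - P) / of_real (norm (Q - P)) + (R - P) / of_real (norm (R - P))) = 0"

definition three_periodic :: "real \<Rightarrow> real \<Rightarrow> complex \<Rightarrow> complex \<Rightarrow> complex \<Rightarrow> bool" where
  "three_periodic a b P1 P2 P3 \<longleftrightarrow>
     on_ellipse a b P1 \<and> on_ellipse a b P2 \<and> on_ellipse a b P3 \<and>
     P1 \<noteq> P2 \<and> P2 \<noteq> P3 \<and> P1 \<noteq> P3 \<and>
     normal_bisects a b P1 P2 P3 \<and> normal_bisects a b P2 P3 P1 \<and> normal_bisects a b P3 P1 P2"

definition invert :: "complex \<Rightarrow> real \<Rightarrow> complex \<Rightarrow> complex" where
  "invert f \<rho> P = f + of_real ((\<rho> / norm (P - f))\<^sup>2) * (P - f)"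

definition perimeter :: "complex \<Rightarrow> complex \<Rightarrow> complex \<Rightarrow> real" where
  "perimeter A B C = dist A B + dist B C + dist C A"

end

theory Submission
  imports Defs
begin

lemma vieta_id1: fixes a c k t1 t2 t3 :: real
  shows "(k^2*(a^2*(t1 + t2)^2 + (a^2 - c^2)*(1 - t1*t2)^2) - (t1 - t2)^2) - (k^2*(a^2*(t1 + t3)^2 + (a^2 - c^2)*(1 - t1*t3)^2) - (t1 - t3)^2) = (t2 - t3)*((k^2*(a^2 + (a^2 - c^2)*t1^2) - 1)*(t2 + t3) - (-2*t1*(k^2*c^2 + 1)))"
  by algebra

lemma vieta_id2: fixes a c k t1 t2 t3 :: real
  shows "(k^2*(a^2*(t1 + t2)^2 + (a^2 - c^2)*(1 - t1*t2)^2) - (t1 - t2)^2) - t2*((k^2*(a^2 + (a^2 - c^2)*t1^2) - 1)*(t2 + t3) - (-2*t1*(k^2*c^2 + 1))) = (k^2*(a^2*t1^2 + (a^2 - c^2)) - t1^2) - (k^2*(a^2 + (a^2 - c^2)*t1^2) - 1)*(t2*t3)"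
  by algebra

lemma polyA_hom: fixes a c k t2 t3 D :: real
  shows "D^2 * (k^2*(a^2*(t2 + t3)^2 + (a^2 - c^2)*(1 - t2*t3)^2) - (t2 - t3)^2) = k^2*(a^2*(D*(t2 + t3))^2 + (a^2 - c^2)*(D - D*(t2*t3))^2) - ((D*(t2 + t3))^2 - 4*(D*(t2*t3))*D)"
  by algebra

lemma polyA_cert: fixes a c k t1 :: real
  shows "k^2*(a^2*(-2*t1*(k^2*c^2 + 1))^2 + (a^2 - c^2)*((k^2*(a^2 + (a^2 - c^2)*t1^2) - 1) - (k^2*(a^2*t1^2 + (a^2 - c^2)) - t1^2))^2) - ((-2*t1*(k^2*c^2 + 1))^2 - 4*(k^2*(a^2*t1^2 + (a^2 - c^2)) - t1^2)*(k^2*(a^2 + (a^2 - c^2)*t1^2) - 1)) = k^2 * (c^4*k^4 + 2*(2*a^2 - c^2)*k^2 - 3) * ((a^2 - c^2)*(1 + t1^2)^2 + 4*c^2*t1^2)"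
  by algebra

lemma polyB_hom: fixes a c k t1 X Y D :: real
  shows "D^2 * (2*(a^2)*(a^2 - c^2)*(c^2)*(2*((X*X - 4*Y)*((a + c) + (a - c)*t1^2) + (a + c)*(2*t1^2 - 2*t1*X + X*X - 2*Y) + (a - c)*(t1^2*(X*X - 2*Y) - 2*t1*Y*X + 2*Y*Y))) - (2*(2*(a^2)^2 - 2*(a^2)*(a^2 - c^2) - (a^2 - c^2)^2) + (2*(a^2) - (a^2 - c^2))*(c^4*k^2 + 2*a^2 - c^2))*(((a + c) + (a - c)*t1^2)*((a + c)^2 + (a + c)*(a - c)*(X*X - 2*Y) + (a - c)^2*Y*Y))) = (2*(a^2)*(a^2 - c^2)*(c^2)*(2*(((D*X)*(D*X) - 4*(D*Y)*D)*((a + c) + (a - c)*t1^2) + (a + c)*(2*t1^2*D^2 - 2*t1*(D*X)*D + (D*X)*(D*X) - 2*(D*Y)*D) + (a - c)*(t1^2*((D*X)*(D*X) - 2*(D*Y)*D) - 2*t1*(D*Y)*(D*X) + 2*(D*Y)*(D*Y)))) - (2*(2*(a^2)^2 - 2*(a^2)*(a^2 - c^2) - (a^2 - c^2)^2) + (2*(a^2) - (a^2 - c^2))*(c^4*k^2 + 2*a^2 - c^2))*(((a + c) + (a - c)*t1^2)*((a + c)^2*D^2 + (a + c)*(a - c)*((D*X)*(D*X) - 2*(D*Y)*D) + (a - c)^2*(D*Y)*(D*Y))))"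
  by algebra

lemma polyB_sym: fixes a c k t1 t2 t3 :: real
  shows "2*(a^2)*(a^2 - c^2)*(c^2)*(2*((t1 - t2)^2*((a + c) + (a - c)*t3^2) + (t2 - t3)^2*((a + c) + (a - c)*t1^2) + (t3 - t1)^2*((a + c) + (a - c)*t2^2))) - (2*(2*(a^2)^2 - 2*(a^2)*(a^2 - c^2) - (a^2 - c^2)^2) + (2*(a^2) - (a^2 - c^2))*(c^4*k^2 + 2*a^2 - c^2))*(((a + c) + (a - c)*t1^2)*((a + c) + (a - c)*t2^2)*((a + c) + (a - c)*t3^2)) = (2*(a^2)*(a^2 - c^2)*(c^2)*(2*(((t2+t3)*(t2+t3) - 4*(t2*t3))*((a + c) + (a - c)*t1^2) + (a + c)*(2*t1^2 - 2*t1*(t2+t3) + (t2+t3)*(t2+t3) - 2*(t2*t3)) + (a - c)*(t1^2*((t2+t3)*(t2+t3) - 2*(t2*t3)) - 2*t1*(t2*t3)*(t2+t3) + 2*(t2*t3)*(t2*t3)))) - (2*(2*(a^2)^2 - 2*(a^2)*(a^2 - c^2) - (a^2 - c^2)^2) + (2*(a^2) - (a^2 - c^2))*(c^4*k^2 + 2*a^2 - c^2))*(((a + c) + (a - c)*t1^2)*((a + c)^2 + (a + c)*(a - c)*((t2+t3)*(t2+t3) - 2*(t2*t3)) + (a - c)^2*(t2*t3)*(t2*t3))))"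
  by algebra

lemma polyB_cert: fixes a c k t1 :: real
  shows "(2*(a^2)*(a^2 - c^2)*(c^2)*(2*(((-2*t1*(k^2*c^2 + 1))*(-2*t1*(k^2*c^2 + 1)) - 4*(k^2*(a^2*t1^2 + (a^2 - c^2)) - t1^2)*(k^2*(a^2 + (a^2 - c^2)*t1^2) - 1))*((a + c) + (a - c)*t1^2) + (a + c)*(2*t1^2*(k^2*(a^2 + (a^2 - c^2)*t1^2) - 1)^2 - 2*t1*(-2*t1*(k^2*c^2 + 1))*(k^2*(a^2 + (a^2 - c^2)*t1^2) - 1) + (-2*t1*(k^2*c^2 + 1))*(-2*t1*(k^2*c^2 + 1)) - 2*(k^2*(a^2*t1^2 + (a^2 - c^2)) - t1^2)*(k^2*(a^2 + (a^2 - c^2)*t1^2) - 1)) + (a - c)*(t1^2*((-2*t1*(k^2*c^2 + 1))*(-2*t1*(k^2*c^2 + 1)) - 2*(k^2*(a^2*t1^2 + (a^2 - c^2)) - t1^2)*(k^2*(a^2 + (a^2 - c^2)*t1^2) - 1)) - 2*t1*(k^2*(a^2*t1^2 + (a^2 - c^2)) - t1^2)*(-2*t1*(k^2*c^2 + 1)) + 2*(k^2*(a^2*t1^2 + (a^2 - c^2)) - t1^2)*(k^2*(a^2*t1^2 + (a^2 - c^2)) - t1^2)))) - (2*(2*(a^2)^2 - 2*(a^2)*(a^2 - c^2) - (a^2 - c^2)^2) + (2*(a^2) - (a^2 - c^2))*(c^4*k^2 + 2*a^2 - c^2))*(((a + c) + (a - c)*t1^2)*((a + c)^2*(k^2*(a^2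 + (a^2 - c^2)*t1^2) - 1)^2 + (a + c)*(a - c)*((-2*t1*(k^2*c^2 + 1))*(-2*t1*(k^2*c^2 + 1)) - 2*(k^2*(a^2*t1^2 + (a^2 - c^2)) - t1^2)*(k^2*(a^2 + (a^2 - c^2)*t1^2) - 1)) + (a - c)^2*(k^2*(a^2*t1^2 + (a^2 - c^2)) - t1^2)*(k^2*(a^2*t1^2 + (a^2 - c^2)) - t1^2)))) = (c^4*k^4 + 2*(2*a^2 - c^2)*k^2 - 3) * (-3*a*c^6 + 3*a*c^6*t1^2 + 3*a*c^6*t1^4 - 3*a*c^6*t1^6 + a*c^8*k^2 - a*c^8*k^2*t1^2 - a*c^8*k^2*t1^4 + a*c^8*k^2*t1^6 - 12*a^2*c^5*t1^2 + 12*a^2*c^5*t1^4 + 4*a^2*c^7*k^2 + 8*a^2*c^7*k^2*t1^2 - 8*a^2*c^7*k^2*t1^4 - 4*a^2*c^7*k^2*t1^6 + 8*a^3*c^4 - 12*a^3*c^4*t1^2 - 12*a^3*c^4*t1^4 + 8*a^3*c^4*t1^6 + 12*a^3*c^6*k^2*t1^2 + 12*a^3*c^6*k^2*t1^4 + 9*a^4*c^3 + 9*a^4*c^3*t1^2 - 9*a^4*c^3*t1^4 - 9*a^4*c^3*t1^6 - 3*a^4*c^5*k^2 - 3*a^4*c^5*k^2*t1^2 + 3*a^4*c^5*k^2*t1^4 + 3*a^4*c^5*k^2*t1^6 + 3*a^5*c^2 + 9*a^5*c^2*t1^2 + 9*a^5*c^2*t1^4 + 3*a^5*c^2*t1^6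 - 5*a^5*c^4*k^2 + a^5*c^4*k^2*t1^2 + a^5*c^4*k^2*t1^4 - 5*a^5*c^4*k^2*t1^6 - 8*a^6*c^3*k^2 - 8*a^6*c^3*k^2*t1^2 + 8*a^6*c^3*k^2*t1^4 + 8*a^6*c^3*k^2*t1^6 - 4*a^7*c^2*k^2 - 12*a^7*c^2*k^2*t1^2 - 12*a^7*c^2*k^2*t1^4 - 4*a^7*c^2*k^2*t1^6 - c^7 + 3*c^7*t1^2 - 3*c^7*t1^4 + c^7*t1^6 - c^9*k^2 + 3*c^9*k^2*t1^2 - 3*c^9*k^2*t1^4 + c^9*k^2*t1^6)"
  by algebra

lemma core_alg:
  fixes a c k t1 t2 t3 :: real
  assumes k: "k > 0" and B: "a^2 - c^2 > 0"
    and F12: "(k^2*(a^2*(t1 + t2)^2 + (a^2 - c^2)*(1 - t1*t2)^2) - (t1 - t2)^2) = 0" and F13: "(k^2*(a^2*(t1 + t3)^2 + (a^2 - c^2)*(1 - t1*t3)^2) - (t1 - t3)^2) = 0" and F23: "(k^2*(a^2*(t2 + t3)^2 + (a^2 - c^2)*(1 - t2*t3)^2) - (t2 - t3)^2) = 0"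
    and d23: "t2 \<noteq> t3"
  shows "(c^4*k^4 + 2*(2*a^2 - c^2)*k^2 - 3) = 0" and "2*(a^2)*(a^2 - c^2)*(c^2)*(2*((t1 - t2)^2*((a + c) + (a - c)*t3^2) + (t2 - t3)^2*((a + c) + (a - c)*t1^2) + (t3 - t1)^2*((a + c) + (a - c)*t2^2))) = (2*(2*(a^2)^2 - 2*(a^2)*(a^2 - c^2) - (a^2 - c^2)^2) + (2*(a^2) - (a^2 - c^2))*(c^4*k^2 + 2*a^2 - c^2))*(((a + c) + (a - c)*t1^2)*((a + c) + (a - c)*t2^2)*((a + c) + (a - c)*t3^2))"
proof -
  have e1: "(k^2*(a^2*(t1 + t2)^2 + (a^2 - c^2)*(1 - t1*t2)^2) - (t1 - t2)^2) - (k^2*(a^2*(t1 + t3)^2 + (a^2 - c^2)*(1 - t1*t3)^2) - (t1 - t3)^2) = (t2 - t3)*((k^2*(a^2 + (a^2 - c^2)*t1^2) - 1)*(t2 + t3) - (-2*t1*(k^2*c^2 + 1)))"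
    by (rule vieta_id1)
  have h1: "(k^2*(a^2 + (a^2 - c^2)*t1^2) - 1)*(t2 + t3) = (-2*t1*(k^2*c^2 + 1))"
    using e1 F12 F13 d23 by simp
  have e2: "(k^2*(a^2*(t1 + t2)^2 + (a^2 - c^2)*(1 - t1*t2)^2) - (t1 - t2)^2) - t2*((k^2*(a^2 + (a^2 - c^2)*t1^2) - 1)*(t2 + t3) - (-2*t1*(k^2*c^2 + 1))) = (k^2*(a^2*t1^2 + (a^2 - c^2)) - t1^2) - (k^2*(a^2 + (a^2 - c^2)*t1^2) - 1)*(t2*t3)"
    by (rule vieta_id2)
  have h2: "(k^2*(a^2 + (a^2 - c^2)*t1^2) - 1)*(t2*t3) = (k^2*(a^2*t1^2 + (a^2 - c^2)) - t1^2)"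
    using e2 F12 h1 by simp
  have "0 = (k^2*(a^2 + (a^2 - c^2)*t1^2) - 1)^2 * (k^2*(a^2*(t2 + t3)^2 + (a^2 - c^2)*(1 - t2*t3)^2) - (t2 - t3)^2)" using F23 by simp
  also have "\<dots> = k^2 * (c^4*k^4 + 2*(2*a^2 - c^2)*k^2 - 3) * ((a^2 - c^2)*(1 + t1^2)^2 + 4*c^2*t1^2)"
    unfolding polyA_hom h1 h2 polyA_cert ..
  finally have z: "k^2 * (c^4*k^4 + 2*(2*a^2 - c^2)*k^2 - 3) * ((a^2 - c^2)*(1 + t1^2)^2 + 4*c^2*t1^2) = 0" by simp
  have Hpos: "((a^2 - c^2)*(1 + t1^2)^2 + 4*c^2*t1^2) > 0"
  proof -
    have "(1::real) + t1^2 > 0" by (simp add: add_pos_nonneg)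
    hence "(a^2 - c^2)*(1 + t1^2)^2 > 0" using B by simp
    moreover have "4*c^2*t1^2 \<ge> 0" by simp
    ultimately show ?thesis by linarith
  qed
  from z k Hpos show q: "(c^4*k^4 + 2*(2*a^2 - c^2)*k^2 - 3) = 0" by simp
  have Dnz: "(k^2*(a^2 + (a^2 - c^2)*t1^2) - 1) \<noteq> 0"
  proof
    assume D0: "(k^2*(a^2 + (a^2 - c^2)*t1^2) - 1) = 0"
    hence "(-2*t1*(k^2*c^2 + 1)) = 0" using h1 by simp
    hence "t1 = 0" by (smt (verit) mult_eq_0_iff zero_le_power2 mult_nonneg_nonneg)
    hence "(k^2*(a^2*t1^2 + (a^2 - c^2)) - t1^2) = k^2*(a^2 - c^2)" by simp
    moreover have "(k^2*(a^2*t1^2 + (a^2 - c^2)) - t1^2) = 0" using h2 D0 by simp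
    ultimately show False using k B by simp
  qed
  have "(k^2*(a^2 + (a^2 - c^2)*t1^2) - 1)^2 * (2*(a^2)*(a^2 - c^2)*(c^2)*(2*(((t2+t3)*(t2+t3) - 4*(t2*t3))*((a + c) + (a - c)*t1^2) + (a + c)*(2*t1^2 - 2*t1*(t2+t3) + (t2+t3)*(t2+t3) - 2*(t2*t3)) + (a - c)*(t1^2*((t2+t3)*(t2+t3) - 2*(t2*t3)) - 2*t1*(t2*t3)*(t2+t3) + 2*(t2*t3)*(t2*t3)))) - (2*(2*(a^2)^2 - 2*(a^2)*(a^2 - c^2) - (a^2 - c^2)^2) + (2*(a^2) - (a^2 - c^2))*(c^4*k^2 + 2*a^2 - c^2))*(((a + c) + (a - c)*t1^2)*((a + c)^2 + (a + c)*(a - c)*((t2+t3)*(t2+t3) - 2*(t2*t3)) + (a - c)^2*(t2*t3)*(t2*t3)))) = (2*(a^2)*(a^2 - c^2)*(c^2)*(2*((((k^2*(a^2 + (a^2 - c^2)*t1^2) - 1)*(t2+t3))*((k^2*(a^2 + (a^2 - c^2)*t1^2) - 1)*(t2+t3)) - 4*((k^2*(a^2 + (a^2 - c^2)*t1^2) - 1)*(t2*t3))*(k^2*(a^2 + (a^2 - c^2)*t1^2) - 1))*((a + c) + (a - c)*t1^2) + (a + c)*(2*t1^2*(k^2*(a^2 + (a^2 - c^2)*t1^2) - 1)^2 - 2*t1*((k^2*(a^2 + (a^2 - c^2)*t1^2) - 1)*(t2+t3))*(k^2*(a^2 + (a^2 - c^2)*t1^2) - 1) + ((k^2*(a^2 +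 (a^2 - c^2)*t1^2) - 1)*(t2+t3))*((k^2*(a^2 + (a^2 - c^2)*t1^2) - 1)*(t2+t3)) - 2*((k^2*(a^2 + (a^2 - c^2)*t1^2) - 1)*(t2*t3))*(k^2*(a^2 + (a^2 - c^2)*t1^2) - 1)) + (a - c)*(t1^2*(((k^2*(a^2 + (a^2 - c^2)*t1^2) - 1)*(t2+t3))*((k^2*(a^2 + (a^2 - c^2)*t1^2) - 1)*(t2+t3)) - 2*((k^2*(a^2 + (a^2 - c^2)*t1^2) - 1)*(t2*t3))*(k^2*(a^2 + (a^2 - c^2)*t1^2) - 1)) - 2*t1*((k^2*(a^2 + (a^2 - c^2)*t1^2) - 1)*(t2*t3))*((k^2*(a^2 + (a^2 - c^2)*t1^2) - 1)*(t2+t3)) + 2*((k^2*(a^2 + (a^2 - c^2)*t1^2) - 1)*(t2*t3))*((k^2*(a^2 + (a^2 - c^2)*t1^2) - 1)*(t2*t3))))) - (2*(2*(a^2)^2 - 2*(a^2)*(a^2 - c^2) - (a^2 - c^2)^2) + (2*(a^2) - (a^2 - c^2))*(c^4*k^2 + 2*a^2 - c^2))*(((a + c) + (a - c)*t1^2)*((a + c)^2*(k^2*(a^2 + (a^2 - c^2)*t1^2) - 1)^2 + (a + c)*(a - c)*(((k^2*(a^2 + (a^2 - c^2)*t1^2) - 1)*(t2+t3))*((k^2*(a^2 + (a^2 - c^2)*t1^2) - 1)*(t2+t3)) - 2*((k^2*(a^2 + (a^2 - c^2)*t1^2) - 1)*(t2*t3))*(k^2*(a^2 + (a^2 - c^2)*t1^2)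 - 1)) + (a - c)^2*((k^2*(a^2 + (a^2 - c^2)*t1^2) - 1)*(t2*t3))*((k^2*(a^2 + (a^2 - c^2)*t1^2) - 1)*(t2*t3)))))"
    by (rule polyB_hom)
  also have "\<dots> = (2*(a^2)*(a^2 - c^2)*(c^2)*(2*(((-2*t1*(k^2*c^2 + 1))*(-2*t1*(k^2*c^2 + 1)) - 4*(k^2*(a^2*t1^2 + (a^2 - c^2)) - t1^2)*(k^2*(a^2 + (a^2 - c^2)*t1^2) - 1))*((a + c) + (a - c)*t1^2) + (a + c)*(2*t1^2*(k^2*(a^2 + (a^2 - c^2)*t1^2) - 1)^2 - 2*t1*(-2*t1*(k^2*c^2 + 1))*(k^2*(a^2 + (a^2 - c^2)*t1^2) - 1) + (-2*t1*(k^2*c^2 + 1))*(-2*t1*(k^2*c^2 + 1)) - 2*(k^2*(a^2*t1^2 + (a^2 - c^2)) - t1^2)*(k^2*(a^2 + (a^2 - c^2)*t1^2) - 1)) + (a - c)*(t1^2*((-2*t1*(k^2*c^2 + 1))*(-2*t1*(k^2*c^2 + 1)) - 2*(k^2*(a^2*t1^2 + (a^2 - c^2)) - t1^2)*(k^2*(a^2 + (a^2 - c^2)*t1^2) - 1)) - 2*t1*(k^2*(a^2*t1^2 + (a^2 - c^2)) - t1^2)*(-2*t1*(k^2*c^2 + 1)) + 2*(k^2*(a^2*t1^2 + (a^2 - c^2)) - t1^2)*(k^2*(a^2*t1^2 + (a^2 - c^2)) - t1^2)))) - (2*(2*(a^2)^2 - 2*(a^2)*(a^2 - c^2) - (a^2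 - c^2)^2) + (2*(a^2) - (a^2 - c^2))*(c^4*k^2 + 2*a^2 - c^2))*(((a + c) + (a - c)*t1^2)*((a + c)^2*(k^2*(a^2 + (a^2 - c^2)*t1^2) - 1)^2 + (a + c)*(a - c)*((-2*t1*(k^2*c^2 + 1))*(-2*t1*(k^2*c^2 + 1)) - 2*(k^2*(a^2*t1^2 + (a^2 - c^2)) - t1^2)*(k^2*(a^2 + (a^2 - c^2)*t1^2) - 1)) + (a - c)^2*(k^2*(a^2*t1^2 + (a^2 - c^2)) - t1^2)*(k^2*(a^2*t1^2 + (a^2 - c^2)) - t1^2))))" unfolding h1 h2 ..
  also have "\<dots> = 0" unfolding polyB_cert q by simp
  finally have "(2*(a^2)*(a^2 - c^2)*(c^2)*(2*(((t2+t3)*(t2+t3) - 4*(t2*t3))*((a + c) + (a - c)*t1^2) + (a + c)*(2*t1^2 - 2*t1*(t2+t3) + (t2+t3)*(t2+t3) - 2*(t2*t3)) + (a - c)*(t1^2*((t2+t3)*(t2+t3) - 2*(t2*t3)) - 2*t1*(t2*t3)*(t2+t3) + 2*(t2*t3)*(t2*t3)))) - (2*(2*(a^2)^2 - 2*(a^2)*(a^2 - c^2) - (a^2 - c^2)^2) + (2*(a^2) - (a^2 - c^2))*(c^4*k^2 + 2*a^2 - c^2))*(((a + c) + (a - c)*t1^2)*((a + c)^2 + (a + c)*(a - c)*((t2+t3)*(t2+t3) - 2*(t2*t3)) + (a - c)^2*(t2*t3)*(t2*t3)))) = 0" using Dnz by simp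
  moreover have "2*(a^2)*(a^2 - c^2)*(c^2)*(2*((t1 - t2)^2*((a + c) + (a - c)*t3^2) + (t2 - t3)^2*((a + c) + (a - c)*t1^2) + (t3 - t1)^2*((a + c) + (a - c)*t2^2))) - (2*(2*(a^2)^2 - 2*(a^2)*(a^2 - c^2) - (a^2 - c^2)^2) + (2*(a^2) - (a^2 - c^2))*(c^4*k^2 + 2*a^2 - c^2))*(((a + c) + (a - c)*t1^2)*((a + c) + (a - c)*t2^2)*((a + c) + (a - c)*t3^2)) = (2*(a^2)*(a^2 - c^2)*(c^2)*(2*(((t2+t3)*(t2+t3) - 4*(t2*t3))*((a + c) + (a - c)*t1^2) + (a + c)*(2*t1^2 - 2*t1*(t2+t3) + (t2+t3)*(t2+t3) - 2*(t2*t3)) + (a - c)*(t1^2*((t2+t3)*(t2+t3) - 2*(t2*t3)) - 2*t1*(t2*t3)*(t2+t3) + 2*(t2*t3)*(t2*t3)))) - (2*(2*(a^2)^2 - 2*(a^2)*(a^2 - c^2) - (a^2 - c^2)^2) + (2*(a^2) - (a^2 - c^2))*(c^4*k^2 + 2*a^2 - c^2))*(((a + c) + (a - c)*t1^2)*((a + c)^2 + (a + c)*(a - c)*((t2+t3)*(t2+t3) - 2*(t2*t3)) + (a - c)^2*(t2*t3)*(t2*t3))))" by (rule polyB_sym)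
  ultimately show "2*(a^2)*(a^2 - c^2)*(c^2)*(2*((t1 - t2)^2*((a + c) + (a - c)*t3^2) + (t2 - t3)^2*((a + c) + (a - c)*t1^2) + (t3 - t1)^2*((a + c) + (a - c)*t2^2))) = (2*(2*(a^2)^2 - 2*(a^2)*(a^2 - c^2) - (a^2 - c^2)^2) + (2*(a^2) - (a^2 - c^2))*(c^4*k^2 + 2*a^2 - c^2))*(((a + c) + (a - c)*t1^2)*((a + c) + (a - c)*t2^2)*((a + c) + (a - c)*t3^2))" by simp
qed

lemma ellipse_w:
  fixes a b x y p q :: real
  assumes "a > 0" "b > 0" "x^2/a^2 + y^2/b^2 = 1" "p^2/a^2 + q^2/b^2 = 1"
  shows "2*(1 - x*p/a^2 - y*q/b^2) = (x-p)^2/a^2 + (y-q)^2/b^2"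
proof -
  have "(x-p)^2/a^2 + (y-q)^2/b^2 = (x^2/a^2 + y^2/b^2) + (p^2/a^2 + q^2/b^2) - 2*(x*p/a^2 + y*q/b^2)"
    using assms(1,2) by (simp add: field_simps power2_eq_square)
  thus ?thesis using assms by simp
qed

lemma w_pos:
  fixes a b x y p q :: real
  assumes "a > 0" "b > 0" "x^2/a^2 + y^2/b^2 = 1" "p^2/a^2 + q^2/b^2 = 1" "(p,q) \<noteq> (x,y)"
  shows "1 - x*p/a^2 - y*q/b^2 > 0"
proof -
  have "(x-p)^2/a^2 + (y-q)^2/b^2 > 0"
  proof (cases "p = x")
    case True
    hence "q \<noteq> y" using assms(5) by auto
    hence "(y-q)^2/b^2 > 0" using assms(2) by simp
    moreover have "(x-p)^2/a^2 \<ge> 0" by simp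
    ultimately show ?thesis by linarith
  next
    case False
    hence "(x-p)^2/a^2 > 0" using assms(1) by simp
    moreover have "(y-q)^2/b^2 \<ge> 0" by simp
    ultimately show ?thesis by linarith
  qed
  hence "2*(1 - x*p/a^2 - y*q/b^2) > 0" using ellipse_w[OF assms(1-4)] by simp
  thus ?thesis by simp
qed

lemma bis_ratio:
  fixes a b x y p q r z n1 n2 :: real
  assumes ab: "a > 0" "b > 0"
    and e1: "x^2/a^2 + y^2/b^2 = 1" and e2: "p^2/a^2 + q^2/b^2 = 1" and e3: "r^2/a^2 + z^2/b^2 = 1"
    and dq: "(p,q) \<noteq> (x,y)" and dr: "(r,z) \<noteq> (x,y)"
    and n1: "n1 = sqrt((p-x)^2+(q-y)^2)" and n2: "n2 = sqrt((r-x)^2+(z-y)^2)"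
    and cr: "(x/a^2)*((q-y)/n1 + (z-y)/n2) - (y/b^2)*((p-x)/n1 + (r-x)/n2) = 0"
  shows "(1 - x*p/a^2 - y*q/b^2)/n1 = (1 - x*r/a^2 - y*z/b^2)/n2"
proof -
  define N1 N2 where "N1 = x/a^2" and "N2 = y/b^2"
  have pos1: "(p-x)^2+(q-y)^2 > 0"
  proof (cases "p = x")
    case True hence "q \<noteq> y" using dq by auto
    thus ?thesis by (simp add: add_nonneg_pos)
  next
    case False thus ?thesis by (simp add: add_pos_nonneg)
  qed
  have pos2: "(r-x)^2+(z-y)^2 > 0"
  proof (cases "r = x")
    case True hence "z \<noteq> y" using dr by auto
    thus ?thesis by (simp add: add_nonneg_pos)
  next
    case False thus ?thesis by (simp add: add_pos_nonneg)
  qed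
  have n1p: "n1 > 0" using pos1 n1 by simp
  have n2p: "n2 > 0" using pos2 n2 by simp
  have n1sq: "n1^2 = (p-x)^2+(q-y)^2" using pos1 n1 by simp
  have n2sq: "n2^2 = (r-x)^2+(z-y)^2" using pos2 n2 by simp
  define w1 w2 where "w1 = 1 - x*p/a^2 - y*q/b^2" and "w2 = 1 - x*r/a^2 - y*z/b^2"
  have w1p: "w1 > 0" unfolding w1_def using w_pos[OF ab e1 e2 dq] .
  have w2p: "w2 > 0" unfolding w2_def using w_pos[OF ab e1 e3 dr] .
  have dp1: "N1*(p-x) + N2*(q-y) = -w1"
  proof -
    have "N1*(p-x) + N2*(q-y) = (x*p/a^2 + y*q/b^2) - (x^2/a^2 + y^2/b^2)"
      unfolding N1_def N2_def using ab by (simp add: field_simps power2_eq_square)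
    thus ?thesis using e1 unfolding w1_def by simp
  qed
  have dp2: "N1*(r-x) + N2*(z-y) = -w2"
  proof -
    have "N1*(r-x) + N2*(z-y) = (x*r/a^2 + y*z/b^2) - (x^2/a^2 + y^2/b^2)"
      unfolding N1_def N2_def using ab by (simp add: field_simps power2_eq_square)
    thus ?thesis using e1 unfolding w2_def by simp
  qed
  define cp cq where "cp = N1*(q-y) - N2*(p-x)" and "cq = N1*(z-y) - N2*(r-x)"
  have crr: "cp/n1 + cq/n2 = 0"
  proof -
    have "cp/n1 + cq/n2 = N1*((q-y)/n1 + (z-y)/n2) - N2*((p-x)/n1 + (r-x)/n2)"
      unfolding cp_def cq_def using n1p n2p by (simp add: field_simps)
    thus ?thesis using cr unfolding N1_def N2_def by simp
  qed
  have lag1: "cp^2 + w1^2 = (N1^2+N2^2)*n1^2"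
  proof -
    have "w1^2 = (N1*(p-x) + N2*(q-y))^2" using dp1 by simp
    thus ?thesis unfolding n1sq cp_def by (simp add: algebra_simps power2_eq_square)
  qed
  have lag2: "cq^2 + w2^2 = (N1^2+N2^2)*n2^2"
  proof -
    have "w2^2 = (N1*(r-x) + N2*(z-y))^2" using dp2 by simp
    thus ?thesis unfolding n2sq cq_def by (simp add: algebra_simps power2_eq_square)
  qed
  have w1s: "w1^2 = (N1^2+N2^2)*n1^2 - cp^2" using lag1 by linarith
  have w2s: "w2^2 = (N1^2+N2^2)*n2^2 - cq^2" using lag2 by linarith
  have "(w1/n1)^2 = (N1^2+N2^2) - (cp/n1)^2"
    unfolding power_divide w1s using n1p by (simp add: diff_divide_distrib)
  also have "(cp/n1)^2 = (cq/n2)^2"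
  proof -
    have "cp/n1 = -(cq/n2)" using crr by linarith
    thus ?thesis by simp
  qed
  also have "(N1^2+N2^2) - (cq/n2)^2 = (w2/n2)^2"
    unfolding power_divide w2s using n2p by (simp add: diff_divide_distrib)
  finally have sq: "(w1/n1)^2 = (w2/n2)^2" .
  have g1: "w1/n1 > 0" using w1p n1p by simp
  have g2: "w2/n2 > 0" using w2p n2p by simp
  have "w1/n1 = w2/n2" using power2_eq_imp_eq[OF sq less_imp_le[OF g1] less_imp_le[OF g2]] .
  thus ?thesis unfolding w1_def w2_def .
qed

definition wf :: "real \<Rightarrow> real \<Rightarrow> complex \<Rightarrow> complex \<Rightarrow> real" where
  "wf a b P Q = 1 - Re P * Re Q / a^2 - Im P * Im Q / b^2"

lemma wf_sym: "wf a b P Q = wf a b Q P"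
  unfolding wf_def by (simp add: mult.commute)

lemma ratio_complex:
  assumes ab: "a > 0" "b > 0" and "on_ellipse a b P" "on_ellipse a b Q" "on_ellipse a b R"
    and "Q \<noteq> P" "R \<noteq> P" and nb: "normal_bisects a b P Q R"
  shows "wf a b P Q / norm (Q - P) = wf a b P R / norm (R - P)"
proof -
  have dq: "(Re Q, Im Q) \<noteq> (Re P, Im P)" using assms(6) by (auto simp: complex_eq_iff)
  have dr: "(Re R, Im R) \<noteq> (Re P, Im P)" using assms(7) by (auto simp: complex_eq_iff)
  have n1: "norm (Q - P) = sqrt((Re Q - Re P)^2 + (Im Q - Im P)^2)" by (simp add: norm_complex_def)
  have n2: "norm (R - P) = sqrt((Re R - Re P)^2 + (Im R - Im P)^2)" by (simp add: norm_complex_def)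
  have cr: "(Re P/a^2)*((Im Q - Im P)/norm (Q - P) + (Im R - Im P)/norm (R - P))
      - (Im P/b^2)*((Re Q - Re P)/norm (Q - P) + (Re R - Re P)/norm (R - P)) = 0"
    using nb unfolding normal_bisects_def cross2_def ellipse_normal_def by simp
  show ?thesis unfolding wf_def
    using bis_ratio[OF ab _ _ _ dq dr n1 n2 cr] assms(3-5) unfolding on_ellipse_def by simp
qed

lemma focus_dist:
  assumes "0 < b" "b < a" "on_ellipse a b P"
  shows "norm (P - Complex (- sqrt (a^2 - b^2)) 0) = a + sqrt (a^2 - b^2) * Re P / a"
proof -
  define c where "c = sqrt (a^2 - b^2)"
  have a0: "a > 0" using assms by simp
  have bb: "b^2 \<le> a^2" using assms by (intro power_mono) auto
  hence c2: "c^2 = a^2 - b^2" unfolding c_def by simp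
  have c0: "c \<ge> 0" unfolding c_def using bb by simp
  have ca: "c < a"
  proof -
    have "c^2 < a^2" using c2 assms by simp
    thus ?thesis using a0 c0 by (simp add: power_less_imp_less_base)
  qed
  have e: "(Re P)^2/a^2 + (Im P)^2/b^2 = 1" using assms(3) unfolding on_ellipse_def .
  have y2: "(Im P)^2 = b^2 - b^2 * (Re P)^2/a^2"
    using e assms(1) by (simp add: field_simps)
  have x2: "(Re P)^2 \<le> a^2"
  proof -
    have "(Im P)^2/b^2 \<ge> 0" by simp
    hence "(Re P)^2/a^2 \<le> 1" using e by linarith
    thus ?thesis using a0 by (simp add: divide_le_eq_1)
  qed
  have xa: "\<bar>Re P\<bar> \<le> a" using abs_le_square_iff[of "Re P" a] x2 a0 by simp
  have pos: "a + c * Re P / a > 0"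
  proof -
    have "\<bar>c * Re P / a\<bar> = c * \<bar>Re P\<bar> / a" using c0 a0 by (simp add: abs_mult)
    also have "\<dots> \<le> c"
    proof -
      have "c * \<bar>Re P\<bar> \<le> c * a" using xa c0 by (rule mult_left_mono)
      thus ?thesis using a0 by (simp add: divide_le_eq mult.commute)
    qed
    finally have "\<bar>c * Re P / a\<bar> < a" using ca by simp
    thus ?thesis unfolding abs_less_iff by linarith
  qed
  have "(norm (P - Complex (- c) 0))^2 = (Re P + c)^2 + (Im P)^2"
    unfolding cmod_power2 by simp
  also have "\<dots> = (a + c * Re P / a)^2"
    unfolding y2 using a0 c2 apply (simp add: field_simps power2_eq_square) by algebra
  finally have "(norm (P - Complex (- c) 0))^2 = (a + c * Re P / a)^2" .
  hence "norm (P - Complex (- c) 0) = a + c * Re P / a"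
    using power2_eq_imp_eq[OF _ norm_ge_zero less_imp_le[OF pos]] by blast
  thus ?thesis unfolding c_def .
qed

lemma inv_cnj:
  fixes u :: complex assumes "u \<noteq> 0"
  shows "of_real ((r / norm u)^2) * u = of_real (r^2) * inverse (cnj u)"
proof -
  have nz: "norm u \<noteq> 0" using assms by simp
  have "u * cnj u = of_real ((norm u)^2)" using complex_norm_square[of u] by simp
  hence "inverse (cnj u) = u / of_real ((norm u)^2)"
    using assms by (simp add: field_simps)
  thus ?thesis using nz by (simp add: field_simps power2_eq_square)
qed

lemma inv_dist:
  assumes "P \<noteq> f" "Q \<noteq> f"
  shows "dist (invert f \<rho> P) (invert f \<rho> Q) = \<rho>^2 * norm (P - Q) / (norm (P - f) * norm (Q - f))"
proof -
  define u v where "u = P - f" and "v = Q - f"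
  have u0: "u \<noteq> 0" and v0: "v \<noteq> 0" using assms unfolding u_def v_def by auto
  have "invert f \<rho> P - invert f \<rho> Q = of_real (\<rho>^2) * (inverse (cnj u) - inverse (cnj v))"
    unfolding invert_def u_def[symmetric] v_def[symmetric] inv_cnj[OF u0] inv_cnj[OF v0]
    by (simp add: algebra_simps)
  also have "inverse (cnj u) - inverse (cnj v) = (cnj v - cnj u) / (cnj u * cnj v)"
    using u0 v0 by (simp add: field_simps)
  finally have eq: "invert f \<rho> P - invert f \<rho> Q = of_real (\<rho>^2) * ((cnj v - cnj u) / (cnj u * cnj v))" .
  have "norm (invert f \<rho> P - invert f \<rho> Q) = \<bar>\<rho>^2\<bar> * (norm (cnj v - cnj u) / (norm (cnj u) * norm (cnj v)))"
    unfolding eq norm_mult norm_divide norm_of_real ..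
  also have "cnj v - cnj u = cnj (Q - P)" unfolding u_def v_def by simp
  finally show ?thesis unfolding dist_norm u_def v_def complex_mod_cnj
    by (simp add: norm_minus_commute)
qed

lemma fa1: fixes a p q r zz :: real assumes "a \<noteq> 0" "q \<noteq> 0" "zz \<noteq> 0"
  shows "(a*p/q)*(a*r/zz)/a^2 = p*r/(q*zz)"
  using assms by (simp add: field_simps power2_eq_square)

lemma fa2: fixes b x y q zz :: real assumes "b \<noteq> 0" "q \<noteq> 0" "zz \<noteq> 0"
  shows "(2*b*x/q)*(2*b*y/zz)/b^2 = 4*x*y/(q*zz)"
  using assms by (simp add: field_simps power2_eq_square)

lemma fa3: fixes a x d :: real assumes "a \<noteq> 0" "d \<noteq> 0"
  shows "a*(2*x/d)/(2*a/d) = x"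
  using assms by (simp add: field_simps)

lemma fa4: fixes a b y d :: real assumes "a \<noteq> 0" "b \<noteq> 0" "d \<noteq> 0"
  shows "2*b*(a*y/(b*d))/(2*a/d) = y"
  using assms by (simp add: field_simps)

lemma tparam:
  fixes a b x y :: real
  assumes a0: "a > 0" and b0: "b > 0" and e: "x^2/a^2 + y^2/b^2 = 1" and xa: "x \<noteq> -a"
  shows "\<exists>t. x = a*(1-t^2)/(1+t^2) \<and> y = 2*b*t/(1+t^2)"
proof -
  have y2: "y^2 = b^2*(a^2-x^2)/a^2" using e a0 b0 by (simp add: field_simps)
  have "(y)^2/b^2 \<ge> 0" by simp
  hence "x^2/a^2 \<le> 1" using e by linarith
  hence x2: "x^2 \<le> a^2" using a0 by (simp add: divide_le_eq_1)
  have "\<bar>x\<bar> \<le> a" using abs_le_square_iff[of x a] x2 a0 by simp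
  hence xp: "x + a > 0" using xa by (auto simp: abs_le_iff)
  define t where "t = a*y/(b*(x+a))"
  have t2: "t^2 = (a-x)/(a+x)"
  proof -
    have "t^2 = a^2*y^2/(b^2*(x+a)^2)" unfolding t_def by (simp add: power_mult_distrib power_divide)
    also have "\<dots> = (a^2-x^2)/(x+a)^2" unfolding y2 using a0 b0 xp by (simp add: field_simps)
    also have "\<dots> = ((a-x)*(a+x))/((a+x)*(a+x))" by (simp add: power2_eq_square algebra_simps)
    also have "\<dots> = (a-x)/(a+x)" using xp by simp
    finally show ?thesis .
  qed
  have h1: "1 + t^2 = 2*a/(a+x)" unfolding t2 using xp by (simp add: field_simps)
  have h2: "1 - t^2 = 2*x/(a+x)" unfolding t2 using xp by (simp add: field_simps)
  have "a*(1-t^2)/(1+t^2) = x" unfolding h1 h2 using xp a0 by (intro fa3) auto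
  moreover have "2*b*t/(1+t^2) = y" unfolding h1 unfolding t_def using xp a0 b0
    by (simp only: add.commute[of x a]) (intro fa4, auto)
  ultimately show ?thesis by metis
qed

lemma tparam_e:
  fixes a b e x y :: real
  assumes a0: "a > 0" and b0: "b > 0" and ee: "e*e = 1" and el: "x^2/a^2 + y^2/b^2 = 1" and xa: "x \<noteq> -e*a"
  shows "\<exists>t. x = e*a*(1-t^2)/(1+t^2) \<and> y = 2*b*t/(1+t^2)"
proof -
  have "(e*x)^2 = x^2" using ee by (simp add: power_mult_distrib power2_eq_square)
  hence el': "(e*x)^2/a^2 + y^2/b^2 = 1" using el by simp
  have "e*x \<noteq> -a"
  proof
    assume "e*x = -a"
    hence "e*(e*x) = -e*a" by simp
    hence "x = -e*a" using ee by (simp add: mult.assoc[symmetric])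
    thus False using xa by simp
  qed
  then obtain t where t: "e*x = a*(1-t^2)/(1+t^2)" "y = 2*b*t/(1+t^2)"
    using tparam[OF a0 b0 el'] by blast
  have "x = e*(e*x)" using ee by (simp add: mult.assoc[symmetric])
  also have "\<dots> = e*a*(1-t^2)/(1+t^2)" unfolding t(1) by simp
  finally show ?thesis using t(2) by blast
qed

lemma wt:
  fixes a b e t1 t2 :: real
  assumes a0: "a > 0" and b0: "b > 0" and ee: "e*e = 1"
  shows "1 - (e*a*(1-t1^2)/(1+t1^2))*(e*a*(1-t2^2)/(1+t2^2))/a^2 - (2*b*t1/(1+t1^2))*(2*b*t2/(1+t2^2))/b^2
     = 2*(t1-t2)^2/((1+t1^2)*(1+t2^2))"
proof -
  have p1: "1 + t1^2 > 0" by (simp add: add_pos_nonneg)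
  have p2: "1 + t2^2 > 0" by (simp add: add_pos_nonneg)
  have "(e*a*(1-t1^2)/(1+t1^2))*(e*a*(1-t2^2)/(1+t2^2)) = (e*e)*(a*(1-t1^2)/(1+t1^2))*(a*(1-t2^2)/(1+t2^2))"
    by (simp add: algebra_simps)
  also have "\<dots> = (a*(1-t1^2)/(1+t1^2))*(a*(1-t2^2)/(1+t2^2))" using ee by simp
  finally have xx: "(e*a*(1-t1^2)/(1+t1^2))*(e*a*(1-t2^2)/(1+t2^2)) = (a*(1-t1^2)/(1+t1^2))*(a*(1-t2^2)/(1+t2^2))" .
  have s1: "(a*(1-t1^2)/(1+t1^2))*(a*(1-t2^2)/(1+t2^2))/a^2 = (1-t1^2)*(1-t2^2)/((1+t1^2)*(1+t2^2))"
    using a0 p1 p2 by (intro fa1) auto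
  have s2: "(2*b*t1/(1+t1^2))*(2*b*t2/(1+t2^2))/b^2 = 4*t1*t2/((1+t1^2)*(1+t2^2))"
    using b0 p1 p2 by (intro fa2) auto
  have E: "(1+t1^2)*(1+t2^2) > 0" using p1 p2 by simp
  have "1 - (1-t1^2)*(1-t2^2)/((1+t1^2)*(1+t2^2)) - 4*t1*t2/((1+t1^2)*(1+t2^2))
      = ((1+t1^2)*(1+t2^2) - (1-t1^2)*(1-t2^2) - 4*t1*t2)/((1+t1^2)*(1+t2^2))"
    using p1 p2 by (simp add: diff_divide_distrib)
  also have "(1+t1^2)*(1+t2^2) - (1-t1^2)*(1-t2^2) - 4*t1*t2 = 2*(t1-t2)^2"
    by (simp add: algebra_simps power2_eq_square)
  finally show ?thesis unfolding xx s1 s2 .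
qed

lemma nt:
  fixes a b e t1 t2 :: real
  assumes a0: "a > 0" and b0: "b > 0" and ee: "e*e = 1"
  shows "(e*a*(1-t1^2)/(1+t1^2) - e*a*(1-t2^2)/(1+t2^2))^2 + (2*b*t1/(1+t1^2) - 2*b*t2/(1+t2^2))^2
     = 4*(t1-t2)^2*(a^2*(t1+t2)^2 + b^2*(1-t1*t2)^2)/((1+t1^2)*(1+t2^2))^2"
proof -
  have p1: "1 + t1^2 > 0" by (simp add: add_pos_nonneg)
  have p2: "1 + t2^2 > 0" by (simp add: add_pos_nonneg)
  have "(e*a*(1-t1^2)/(1+t1^2) - e*a*(1-t2^2)/(1+t2^2))^2 = (e*e)*(a*(1-t1^2)/(1+t1^2) - a*(1-t2^2)/(1+t2^2))^2"
    by (simp add: algebra_simps power2_eq_square)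
  also have "\<dots> = (a*(1-t1^2)/(1+t1^2) - a*(1-t2^2)/(1+t2^2))^2" using ee by simp
  finally have xx: "(e*a*(1-t1^2)/(1+t1^2) - e*a*(1-t2^2)/(1+t2^2))^2 = (a*(1-t1^2)/(1+t1^2) - a*(1-t2^2)/(1+t2^2))^2" .
  have s1: "a*(1-t1^2)/(1+t1^2) - a*(1-t2^2)/(1+t2^2) = a*(2*(t2^2-t1^2))/((1+t1^2)*(1+t2^2))"
    using p1 p2 by (simp add: diff_frac_eq; simp add: algebra_simps)
  have s2: "2*b*t1/(1+t1^2) - 2*b*t2/(1+t2^2) = b*(2*(t1-t2)*(1-t1*t2))/((1+t1^2)*(1+t2^2))"
  proof -
    have "2*b*t1/(1+t1^2) - 2*b*t2/(1+t2^2) = (2*b*t1*(1+t2^2) - 2*b*t2*(1+t1^2))/((1+t1^2)*(1+t2^2))"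
      using p1 p2 by (simp add: diff_frac_eq)
    also have "2*b*t1*(1+t2^2) - 2*b*t2*(1+t1^2) = b*(2*(t1-t2)*(1-t1*t2))" by algebra
    finally show ?thesis .
  qed
  have E: "(1+t1^2)*(1+t2^2) > 0" using p1 p2 by simp
  have "(a*(2*(t2^2-t1^2))/((1+t1^2)*(1+t2^2)))^2 + (b*(2*(t1-t2)*(1-t1*t2))/((1+t1^2)*(1+t2^2)))^2
     = ((a*(2*(t2^2-t1^2)))^2 + (b*(2*(t1-t2)*(1-t1*t2)))^2)/((1+t1^2)*(1+t2^2))^2"
    by (simp add: power_divide add_divide_distrib)
  also have "(a*(2*(t2^2-t1^2)))^2 + (b*(2*(t1-t2)*(1-t1*t2)))^2 = 4*(t1-t2)^2*(a^2*(t1+t2)^2 + b^2*(1-t1*t2)^2)"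
    by algebra
  finally show ?thesis unfolding xx s1 s2 .
qed

lemma trel:
  fixes a b e k t1 t2 :: real
  assumes a0: "a > 0" and b0: "b > 0" and ee: "e*e = 1" and d: "t1 \<noteq> t2"
    and w: "2*(t1-t2)^2/((1+t1^2)*(1+t2^2)) = k * sqrt (4*(t1-t2)^2*(a^2*(t1+t2)^2 + b^2*(1-t1*t2)^2)/((1+t1^2)*(1+t2^2))^2)"
  shows "k^2*(a^2*(t1+t2)^2 + b^2*(1-t1*t2)^2) = (t1-t2)^2"
proof -
  define E where "E = (1+t1^2)*(1+t2^2)"
  define G where "G = a^2*(t1+t2)^2 + b^2*(1-t1*t2)^2"
  have Ep: "E > 0" unfolding E_def by (simp add: add_pos_nonneg)
  have Gp: "G \<ge> 0" unfolding G_def by simp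
  have dd: "(t1-t2)^2 > 0" using d by simp
  have "(2*(t1-t2)^2/E)^2 = k^2 * (4*(t1-t2)^2*G/E^2)"
    using w unfolding E_def[symmetric] G_def[symmetric]
    by (simp add: power_mult_distrib Ep Gp)
  hence "4*((t1-t2)^2)^2/E^2 = 4*(t1-t2)^2*(k^2*G)/E^2"
    by (simp add: power_divide power_mult_distrib algebra_simps)
  hence "4*((t1-t2)^2)^2 = 4*(t1-t2)^2*(k^2*G)" using Ep by simp
  hence "(t1-t2)^2 * ((t1-t2)^2 - k^2*G) = 0" by (simp add: algebra_simps power2_eq_square)
  hence "(t1-t2)^2 = k^2*G" using dd by simp
  thus ?thesis unfolding G_def by simp
qed

lemma dt:
  fixes a c0 e t :: real
  assumes a0: "a > 0"
  shows "a + c0 * (e*a*(1-t^2)/(1+t^2)) / a = ((a + e*c0) + (a - e*c0)*t^2)/(1+t^2)"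
proof -
  have p: "1 + t^2 > 0" by (simp add: add_pos_nonneg)
  have "c0 * (e*a*(1-t^2)/(1+t^2)) / a = e*c0*(1-t^2)/(1+t^2)" using a0 by simp
  moreover have "a + e*c0*(1-t^2)/(1+t^2) = (a*(1+t^2) + e*c0*(1-t^2))/(1+t^2)"
    using p by (simp add: field_simps)
  moreover have "a*(1+t^2) + e*c0*(1-t^2) = (a + e*c0) + (a - e*c0)*t^2" by (simp add: algebra_simps)
  ultimately show ?thesis by simp
qed

lemma final_val:
  fixes a b c k :: real
  assumes b0: "0 < b" and ba: "b < a" and c2: "c^2 = a^2 - b^2" and k0: "k > 0" and q: "(c^4*k^4 + 2*(2*a^2 - c^2)*k^2 - 3) = 0"
  shows "(2*(2*(a^2)^2 - 2*(a^2)*(a^2 - c^2) - (a^2 - c^2)^2) + (2*(a^2) - (a^2 - c^2))*(c^4*k^2 + 2*a^2 - c^2)) / (2*k*(a^2)*(a^2 - c^2)*(c^2)) = sqrt ((8 * a ^ 4 + 4 * a\<^sup>2 * b\<^sup>2 + 2 * b ^ 4) * sqrt (a ^ 4 - a\<^sup>2 * b\<^sup>2 + b ^ 4) + 8 * a ^ 6 + 3 * a\<^sup>2 * b ^ 4 + 2 * b ^ 6) / (a\<^sup>2 * b\<^sup>2)"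
proof -
  define A B d where "A = a^2" and "B = b^2" and "d = sqrt (a ^ 4 - a\<^sup>2 * b\<^sup>2 + b ^ 4)"
  have A0: "A > 0" and B0: "B > 0" unfolding A_def B_def using b0 ba by auto
  have AB: "A > B" unfolding A_def B_def using b0 ba by (simp add: power_strict_mono)
  have a4: "a^4 = A^2" "a^6 = A^3" "b^4 = B^2" "b^6 = B^3"
    unfolding A_def B_def by algebra+
  have c4: "c^4 = (A-B)^2" unfolding A_def B_def using c2 by algebra
  have cc: "c^2 = A - B" unfolding A_def B_def using c2 .
  have rad: "a ^ 4 - a\<^sup>2 * b\<^sup>2 + b ^ 4 = A^2 - A*B + B^2" unfolding a4 A_def B_def by simp
  have radp: "A^2 - A*B + B^2 > 0"
  proof -
    have "A^2 - A*B + B^2 = (A - B)^2 + A*B" by (simp add: power2_eq_square algebra_simps)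
    moreover have "A*B > 0" using A0 B0 by simp
    ultimately show ?thesis by (smt (verit) zero_le_power2)
  qed
  have "a ^ 4 - a\<^sup>2 * b\<^sup>2 + b ^ 4 > 0" using radp rad by simp
  hence d0: "d \<ge> 0" unfolding d_def by simp
  have "a ^ 4 - a\<^sup>2 * b\<^sup>2 + b ^ 4 > 0" using radp rad by simp
  hence "d^2 = a ^ 4 - a\<^sup>2 * b\<^sup>2 + b ^ 4" unfolding d_def using real_sqrt_pow2 less_imp_le by blast
  hence d2: "d^2 = A^2 - A*B + B^2" using rad by simp
  have q': "(A-B)^2*k^4 + 2*(A+B)*k^2 - 3 = 0" using q unfolding c4 cc A_def[symmetric] by (simp add: A_def)
  have prod: "((A-B)^2*k^2 - (2*d - A - B))*((A-B)^2*k^2 + 2*d + A + B) = (A-B)^2*((A-B)^2*k^4 + 2*(A+B)*k^2 - 3)"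
    using d2 by algebra
  have f2: "(A-B)^2*k^2 + 2*d + A + B > 0"
  proof -
    have "(A-B)^2*k^2 \<ge> 0" by simp
    thus ?thesis using A0 B0 d0 by linarith
  qed
  have kk: "(A-B)^2*k^2 = 2*d - A - B" using prod q' f2 by simp
  have dgt: "2*d - A - B > 0"
  proof -
    have "(A-B)^2*k^2 > 0" using AB k0 by simp
    thus ?thesis using kk by simp
  qed
  have dge: "2*d \<ge> A + B" using dgt by simp
  define uu vv where "uu = 2*A^2 - 2*A*B - B^2" and "vv = 2*A - B"
  have kap: "(2*(2*(a^2)^2 - 2*(a^2)*(a^2 - c^2) - (a^2 - c^2)^2) + (2*(a^2) - (a^2 - c^2))*(c^4*k^2 + 2*a^2 - c^2)) = 2*(uu + vv*d)"
  proof -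
    have "(2*(2*(a^2)^2 - 2*(a^2)*(a^2 - c^2) - (a^2 - c^2)^2) + (2*(a^2) - (a^2 - c^2))*(c^4*k^2 + 2*a^2 - c^2)) = 2*(2*A^2 - 2*A*B - B^2) + (2*A - B)*((A-B)^2*k^2 + A + B)"
      unfolding c4 cc A_def[symmetric] B_def[symmetric]
      using c2 unfolding A_def B_def by (simp add: algebra_simps)
    thus ?thesis unfolding kk uu_def vv_def by (simp add: algebra_simps)
  qed
  have uvpos: "uu + vv*d > 0"
  proof -
    have "vv > 0" unfolding vv_def using AB B0 by simp
    hence "vv*(2*d) \<ge> vv*(A+B)" using dge by (simp add: mult_left_mono)
    hence le: "2*uu + vv*(A+B) \<le> 2*(uu + vv*d)" by (simp add: algebra_simps)
    have eq: "2*uu + vv*(A+B) = 3*(2*A+B)*(A-B)" unfolding uu_def vv_def by (simp add: algebra_simps power2_eq_square)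
    have "3*(2*A+B)*(A-B) > 0" using AB A0 B0 by simp
    hence "0 < 2*uu + vv*(A+B)" using eq by simp
    hence "0 < 2*(uu + vv*d)" using le by (rule less_le_trans)
    thus ?thesis by simp
  qed
  have kC: "k*(A-B) > 0" using k0 AB by simp
  have XX: "((8 * a ^ 4 + 4 * a\<^sup>2 * b\<^sup>2 + 2 * b ^ 4) * sqrt (a ^ 4 - a\<^sup>2 * b\<^sup>2 + b ^ 4) + 8 * a ^ 6 + 3 * a\<^sup>2 * b ^ 4 + 2 * b ^ 6) = (8*A^2 + 4*A*B + 2*B^2)*d + 8*A^3 + 3*A*B^2 + 2*B^3"
    unfolding d_def a4 A_def B_def by simp
  have sq: "sqrt ((8*A^2 + 4*A*B + 2*B^2)*d + 8*A^3 + 3*A*B^2 + 2*B^3) = (uu + vv*d)/(k*(A-B))"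
  proof (rule real_sqrt_unique)
    show "0 \<le> (uu + vv*d)/(k*(A-B))" using uvpos kC by simp
    have "(uu + vv*d)^2 = ((8*A^2 + 4*A*B + 2*B^2)*d + 8*A^3 + 3*A*B^2 + 2*B^3)*(2*d - A - B)"
      unfolding uu_def vv_def using d2 by algebra
    moreover have "(k*(A-B))^2 = 2*d - A - B" using kk by (simp add: power_mult_distrib mult.commute)
    ultimately show "((uu + vv*d)/(k*(A-B)))^2 = (8*A^2 + 4*A*B + 2*B^2)*d + 8*A^3 + 3*A*B^2 + 2*B^3"
      using dgt by (simp add: power_divide)
  qed
  have "(2*(2*(a^2)^2 - 2*(a^2)*(a^2 - c^2) - (a^2 - c^2)^2) + (2*(a^2) - (a^2 - c^2))*(c^4*k^2 + 2*a^2 - c^2)) / (2*k*(a^2)*(a^2 - c^2)*(c^2)) = 2*(uu+vv*d)/(2*k*A*B*(A-B))"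
    unfolding kap using c2 unfolding A_def B_def by simp
  also have "\<dots> = ((uu+vv*d)/(k*(A-B)))/(A*B)"
  proof -
    have "A - B \<noteq> 0" "k \<noteq> 0" using AB k0 by auto
    thus ?thesis using A0 B0 by (simp add: field_simps)
  qed
  also have "\<dots> = sqrt ((8*A^2 + 4*A*B + 2*B^2)*d + 8*A^3 + 3*A*B^2 + 2*B^3)/(A*B)" by (simp only: sq)
  also have "\<dots> = sqrt ((8 * a ^ 4 + 4 * a\<^sup>2 * b\<^sup>2 + 2 * b ^ 4) * sqrt (a ^ 4 - a\<^sup>2 * b\<^sup>2 + b ^ 4) + 8 * a ^ 6 + 3 * a\<^sup>2 * b ^ 4 + 2 * b ^ 6) / (A*B)" by (simp only: XX)
  also have "A*B = a\<^sup>2 * b\<^sup>2" unfolding A_def B_def ..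
  finally show ?thesis .
qed

lemma dist_piece:
  fixes \<rho> k E1 E2 R1 R2 W n t1 t2 :: real
  assumes "k > 0" "E1 > 0" "E2 > 0" "R1 > 0" "R2 > 0" "W = k*n" "W = 2*(t1-t2)^2/(E1*E2)"
  shows "\<rho>^2 * n / ((R1/E1)*(R2/E2)) = \<rho>^2/k * (2*(t1-t2)^2/(R1*R2))"
proof -
  have "n = 2*(t1-t2)^2/(E1*E2)/k" using assms by (simp add: field_simps)
  thus ?thesis using assms by (simp add: field_simps)
qed

lemma sum_pieces:
  fixes r t1 t2 t3 R1 R2 R3 :: real
  assumes "R1 > 0" "R2 > 0" "R3 > 0"
  shows "r * (2*(t1-t2)^2/(R1*R2)) + r * (2*(t2-t3)^2/(R2*R3)) + r * (2*(t3-t1)^2/(R3*R1))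
    = r * ((2*((t1 - t2)^2*R3 + (t2 - t3)^2*R1 + (t3 - t1)^2*R2)) / (R1*R2*R3))"
  using assms by (simp add: field_simps)

lemma core_e:
  fixes a b \<rho> e k :: real and P1 P2 P3 :: complex
  assumes b0: "b > 0" and ba: "a > b" and ee: "e*e = 1" and k0: "k > 0"
    and o1: "on_ellipse a b P1" and o2: "on_ellipse a b P2" and o3: "on_ellipse a b P3"
    and d12: "P1 \<noteq> P2" and d23: "P2 \<noteq> P3" and d13: "P1 \<noteq> P3"
    and n1: "Re P1 \<noteq> -e*a" and n2: "Re P2 \<noteq> -e*a" and n3: "Re P3 \<noteq> -e*a"
    and w12: "wf a b P1 P2 = k * norm (P1 - P2)" and w23: "wf a b P2 P3 = k * norm (P2 - P3)"
    and w13: "wf a b P1 P3 = k * norm (P1 - P3)"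
  shows "perimeter (invert (Complex (- sqrt (a\<^sup>2 - b\<^sup>2)) 0) \<rho> P1) (invert (Complex (- sqrt (a\<^sup>2 - b\<^sup>2)) 0) \<rho> P2)
      (invert (Complex (- sqrt (a\<^sup>2 - b\<^sup>2)) 0) \<rho> P3) = \<rho>\<^sup>2 * sqrt ((8 * a ^ 4 + 4 * a\<^sup>2 * b\<^sup>2 + 2 * b ^ 4) * sqrt (a ^ 4 - a\<^sup>2 * b\<^sup>2 + b ^ 4) + 8 * a ^ 6 + 3 * a\<^sup>2 * b ^ 4 + 2 * b ^ 6) / (a\<^sup>2 * b\<^sup>2)"
proof -
  have a0: "a > 0" using b0 ba by simp
  define c0 where "c0 = sqrt (a^2 - b^2)"
  define f where "f = Complex (- c0) 0"
  define c where "c = e * c0"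
  have bb: "b^2 < a^2" using b0 ba by (simp add: power_strict_mono)
  have c02: "c0^2 = a^2 - b^2" unfolding c0_def using bb by simp
  have c2: "c^2 = a^2 - b^2" unfolding c_def using c02 ee by algebra
  have Bc: "a^2 - c^2 = b^2" using c2 by simp
  have Bpos: "a^2 - c^2 > 0" using Bc b0 by simp
  have cabs: "\<bar>c\<bar> < a"
  proof -
    have "c^2 < a^2" using c2 b0 by simp
    thus ?thesis using a0 power2_less_imp_less[of "\<bar>c\<bar>" a] by simp
  qed
  have acp: "a + c > 0" and acm: "a - c > 0" using cabs by (auto simp: abs_less_iff)
  from tparam_e[OF a0 b0 ee o1[unfolded on_ellipse_def] n1]
  obtain t1 where x1: "Re P1 = e*a*(1-t1^2)/(1+t1^2)" and y1: "Im P1 = 2*b*t1/(1+t1^2)" by blast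
  from tparam_e[OF a0 b0 ee o2[unfolded on_ellipse_def] n2]
  obtain t2 where x2: "Re P2 = e*a*(1-t2^2)/(1+t2^2)" and y2: "Im P2 = 2*b*t2/(1+t2^2)" by blast
  from tparam_e[OF a0 b0 ee o3[unfolded on_ellipse_def] n3]
  obtain t3 where x3: "Re P3 = e*a*(1-t3^2)/(1+t3^2)" and y3: "Im P3 = 2*b*t3/(1+t3^2)" by blast
  have t12: "t1 \<noteq> t2" using d12 x1 x2 y1 y2 by (auto simp: complex_eq_iff)
  have t23: "t2 \<noteq> t3" using d23 x2 x3 y2 y3 by (auto simp: complex_eq_iff)
  have t13: "t1 \<noteq> t3" using d13 x1 x3 y1 y3 by (auto simp: complex_eq_iff)
  have ww: "wf a b P Q = 2*(zz-t)^2/((1+zz^2)*(1+t^2))"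
    if "Re P = e*a*(1-zz^2)/(1+zz^2)" "Im P = 2*b*zz/(1+zz^2)" "Re Q = e*a*(1-t^2)/(1+t^2)" "Im Q = 2*b*t/(1+t^2)"
    for P Q zz t
    unfolding wf_def that by (rule wt[OF a0 b0 ee])
  have nn: "norm (P - Q) = sqrt (4*(zz-t)^2*(a^2*(zz+t)^2 + b^2*(1-zz*t)^2)/((1+zz^2)*(1+t^2))^2)"
    if "Re P = e*a*(1-zz^2)/(1+zz^2)" "Im P = 2*b*zz/(1+zz^2)" "Re Q = e*a*(1-t^2)/(1+t^2)" "Im Q = 2*b*t/(1+t^2)"
    for P Q zz t
  proof -
    have "norm (P - Q) = sqrt ((Re P - Re Q)^2 + (Im P - Im Q)^2)" by (simp add: norm_complex_def)
    also have "(Re P - Re Q)^2 + (Im P - Im Q)^2 = 4*(zz-t)^2*(a^2*(zz+t)^2 + b^2*(1-zz*t)^2)/((1+zz^2)*(1+t^2))^2"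
      unfolding that by (rule nt[OF a0 b0 ee])
    finally show ?thesis .
  qed
  have FF: "k^2*(a^2*(zz+t)^2 + (a^2 - c^2)*(1-zz*t)^2) - (zz-t)^2 = 0"
    if "wf a b P Q = k * norm (P - Q)" "zz \<noteq> t"
     "Re P = e*a*(1-zz^2)/(1+zz^2)" "Im P = 2*b*zz/(1+zz^2)" "Re Q = e*a*(1-t^2)/(1+t^2)" "Im Q = 2*b*t/(1+t^2)"
    for P Q zz t
  proof -
    have "2*(zz-t)^2/((1+zz^2)*(1+t^2)) = k * sqrt (4*(zz-t)^2*(a^2*(zz+t)^2 + b^2*(1-zz*t)^2)/((1+zz^2)*(1+t^2))^2)"
      using that(1) unfolding ww[OF that(3-6)] nn[OF that(3-6)] .
    from trel[OF a0 b0 ee that(2) this] show ?thesis unfolding Bc by simp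
  qed
  have F12: "(k^2*(a^2*(t1 + t2)^2 + (a^2 - c^2)*(1 - t1*t2)^2) - (t1 - t2)^2) = 0" unfolding c_def[symmetric] using FF[OF w12 t12 x1 y1 x2 y2] .
  have F13: "(k^2*(a^2*(t1 + t3)^2 + (a^2 - c^2)*(1 - t1*t3)^2) - (t1 - t3)^2) = 0" using FF[OF w13 t13 x1 y1 x3 y3] .
  have F23: "(k^2*(a^2*(t2 + t3)^2 + (a^2 - c^2)*(1 - t2*t3)^2) - (t2 - t3)^2) = 0" using FF[OF w23 t23 x2 y2 x3 y3] .
  note CA = core_alg[OF k0 Bpos F12 F13 F23 t23]
  have dd: "norm (P - f) = ((a + c) + (a - c)*zz^2)/(1+zz^2)"
    if "on_ellipse a b P" "Re P = e*a*(1-zz^2)/(1+zz^2)" for P zz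
  proof -
    have "norm (P - f) = a + c0 * Re P / a" unfolding f_def c0_def by (rule focus_dist[OF b0 ba that(1)])
    also have "\<dots> = ((a + e*c0) + (a - e*c0)*zz^2)/(1+zz^2)" unfolding that(2) by (rule dt[OF a0])
    finally show ?thesis unfolding c_def .
  qed
  have Rp: "(a + c) + (a - c)*zz^2 > 0" for zz
  proof -
    have "(a - c)*zz^2 \<ge> 0" using acm by simp
    thus ?thesis using acp by linarith
  qed
  have Ep: "1 + zz^2 > 0" for zz :: real by (simp add: add_pos_nonneg)
  have Pf: "P \<noteq> f" if "on_ellipse a b P" "Re P = e*a*(1-zz^2)/(1+zz^2)" for P zz
  proof
    assume "P = f"
    hence "norm (P - f) = 0" by simp
    moreover have "norm (P - f) > 0" unfolding dd[OF that] using Rp[of zz] Ep[of zz] by simp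
    ultimately show False by simp
  qed
  have piece: "dist (invert f \<rho> P) (invert f \<rho> Q) = \<rho>^2/k * (2*(zz-t)^2/(((a + c) + (a - c)*zz^2)*((a + c) + (a - c)*t^2)))"
    if "on_ellipse a b P" "on_ellipse a b Q" "wf a b P Q = k * norm (P - Q)"
     "Re P = e*a*(1-zz^2)/(1+zz^2)" "Im P = 2*b*zz/(1+zz^2)" "Re Q = e*a*(1-t^2)/(1+t^2)" "Im Q = 2*b*t/(1+t^2)"
    for P Q zz t
  proof -
    have "dist (invert f \<rho> P) (invert f \<rho> Q) = \<rho>^2 * norm (P - Q) / (norm (P - f) * norm (Q - f))"
      by (rule inv_dist[OF Pf[OF that(1,4)] Pf[OF that(2,6)]])
    also have "\<dots> = \<rho>^2 * norm (P - Q) / ((((a + c) + (a - c)*zz^2)/(1+zz^2)) * (((a + c) + (a - c)*t^2)/(1+t^2)))"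
      unfolding dd[OF that(1,4)] dd[OF that(2,6)] ..
    also have "\<dots> = \<rho>^2/k * (2*(zz-t)^2/(((a + c) + (a - c)*zz^2)*((a + c) + (a - c)*t^2)))"
      by (rule dist_piece[OF k0 Ep Ep Rp Rp that(3) ww[OF that(4-7)]])
    finally show ?thesis .
  qed
  have w31: "wf a b P3 P1 = k * norm (P3 - P1)" using w13 by (simp add: wf_sym norm_minus_commute)
  have "perimeter (invert f \<rho> P1) (invert f \<rho> P2) (invert f \<rho> P3)
      = \<rho>^2/k * (2*(t1-t2)^2/(((a + c) + (a - c)*t1^2)*((a + c) + (a - c)*t2^2)))
      + \<rho>^2/k * (2*(t2-t3)^2/(((a + c) + (a - c)*t2^2)*((a + c) + (a - c)*t3^2)))
      + \<rho>^2/k * (2*(t3-t1)^2/(((a + c) + (a - c)*t3^2)*((a + c) + (a - c)*t1^2)))"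
    unfolding perimeter_def piece[OF o1 o2 w12 x1 y1 x2 y2] piece[OF o2 o3 w23 x2 y2 x3 y3]
      piece[OF o3 o1 w31 x3 y3 x1 y1] ..
  also have "\<dots> = \<rho>^2/k * ((2*((t1 - t2)^2*((a + c) + (a - c)*t3^2) + (t2 - t3)^2*((a + c) + (a - c)*t1^2) + (t3 - t1)^2*((a + c) + (a - c)*t2^2))) / (((a + c) + (a - c)*t1^2)*((a + c) + (a - c)*t2^2)*((a + c) + (a - c)*t3^2)))"
    by (rule sum_pieces[OF Rp Rp Rp])
  also have "(2*((t1 - t2)^2*((a + c) + (a - c)*t3^2) + (t2 - t3)^2*((a + c) + (a - c)*t1^2) + (t3 - t1)^2*((a + c) + (a - c)*t2^2))) / (((a + c) + (a - c)*t1^2)*((a + c) + (a - c)*t2^2)*((a + c) + (a - c)*t3^2)) = (2*(2*(a^2)^2 - 2*(a^2)*(a^2 - c^2) - (a^2 - c^2)^2) + (2*(a^2) - (a^2 - c^2))*(c^4*k^2 + 2*a^2 - c^2)) / (2*(a^2)*(a^2 - c^2)*(c^2))"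
  proof -
    have "(((a + c) + (a - c)*t1^2)*((a + c) + (a - c)*t2^2)*((a + c) + (a - c)*t3^2)) > 0" using Rp by (simp add: mult_pos_pos)
    moreover have "2*(a^2)*(a^2 - c^2)*(c^2) \<noteq> 0" using a0 Bpos c2 bb by auto
    ultimately show ?thesis using CA(2) by (simp add: field_simps)
  qed
  also have "\<rho>^2/k * ((2*(2*(a^2)^2 - 2*(a^2)*(a^2 - c^2) - (a^2 - c^2)^2) + (2*(a^2) - (a^2 - c^2))*(c^4*k^2 + 2*a^2 - c^2)) / (2*(a^2)*(a^2 - c^2)*(c^2))) = \<rho>^2 * ((2*(2*(a^2)^2 - 2*(a^2)*(a^2 - c^2) - (a^2 - c^2)^2) + (2*(a^2) - (a^2 - c^2))*(c^4*k^2 + 2*a^2 - c^2)) / (2*k*(a^2)*(a^2 - c^2)*(c^2)))"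
    by (simp add: field_simps)
  also have "(2*(2*(a^2)^2 - 2*(a^2)*(a^2 - c^2) - (a^2 - c^2)^2) + (2*(a^2) - (a^2 - c^2))*(c^4*k^2 + 2*a^2 - c^2)) / (2*k*(a^2)*(a^2 - c^2)*(c^2)) = sqrt ((8 * a ^ 4 + 4 * a\<^sup>2 * b\<^sup>2 + 2 * b ^ 4) * sqrt (a ^ 4 - a\<^sup>2 * b\<^sup>2 + b ^ 4) + 8 * a ^ 6 + 3 * a\<^sup>2 * b ^ 4 + 2 * b ^ 6) / (a\<^sup>2 * b\<^sup>2)"
    by (rule final_val[OF b0 ba c2 k0 CA(1)])
  finally show ?thesis unfolding f_def c0_def by simp
qed

lemma vert_y0:
  assumes b0: "b > 0" and a0: "a > 0" and o: "on_ellipse a b P" and x: "Re P = -a \<or> Re P = a"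
  shows "Im P = 0"
proof -
  have "(Re P)^2 = a^2" using x by auto
  hence "(Re P)^2/a^2 = 1" using a0 by simp
  hence "(Im P)^2/b^2 = 0" using o unfolding on_ellipse_def by linarith
  thus ?thesis using b0 by simp
qed

lemma no_anti:
  fixes a b k :: real and P Q R :: complex
  assumes a0: "a > 0" and b0: "b > 0" and oP: "on_ellipse a b P" and oQ: "on_ellipse a b Q"
    and oR: "on_ellipse a b R"
    and xP: "Re P = -a" and xQ: "Re Q = a"
    and wPQ: "wf a b P Q = k * norm (P - Q)" and wPR: "wf a b P R = k * norm (P - R)"
  shows "R = P \<or> R = Q"
proof -
  have yP: "Im P = 0" using vert_y0[OF b0 a0 oP] xP by simp
  have yQ: "Im Q = 0" using vert_y0[OF b0 a0 oQ] xQ by simp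
  have "wf a b P Q = 2" unfolding wf_def xP xQ yP yQ using a0 by (simp add: power2_eq_square)
  moreover have "norm (P - Q) = 2*a"
  proof -
    have "(Re (P - Q))^2 + (Im (P - Q))^2 = (2*a)^2" using xP xQ yP yQ by (simp add: power2_eq_square)
    hence "norm (P - Q) = sqrt ((2*a)^2)" unfolding norm_complex_def by simp
    thus ?thesis using a0 real_sqrt_abs[of "2*a"] by (simp only:)
  qed
  ultimately have kk: "k = 1/a" using wPQ a0 by (simp add: field_simps)
  define x y where "x = Re R" and "y = Im R"
  have eR: "x^2/a^2 + y^2/b^2 = 1" using oR unfolding on_ellipse_def x_def y_def .
  have nPR: "norm (P - R) = sqrt ((a + x)^2 + y^2)"
    unfolding norm_complex_def x_def y_def using xP yP by (simp add: power2_eq_square algebra_simps)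
  have "1 + x/a = (1/a) * sqrt ((a + x)^2 + y^2)"
    using wPR unfolding wf_def kk nPR xP yP x_def[symmetric] y_def[symmetric] using a0
    by (simp add: power2_eq_square)
  hence s: "sqrt ((a + x)^2 + y^2) = a + x" using a0 by (simp add: field_simps)
  hence "a + x \<ge> 0" by (metis real_sqrt_ge_zero add_nonneg_nonneg zero_le_power2)
  have "(a + x)^2 + y^2 = (a + x)^2"
  proof -
    have "(a + x)^2 + y^2 = (sqrt ((a + x)^2 + y^2))^2" by simp
    also have "\<dots> = (a + x)^2" unfolding s ..
    finally show ?thesis .
  qed
  hence y0: "y = 0" by simp
  hence "x^2 = a^2" using eR a0 by simp
  hence "x = a \<or> x = -a" by (simp add: power2_eq_iff)
  thus ?thesis using y0 xP yP xQ yQ unfolding x_def y_def by (auto simp: complex_eq_iff)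
qed

theorem mainTheorem4:
  fixes a b \<rho> :: real and P1 P2 P3 :: complex
  assumes "a > b" "b > 0" "\<rho> > 0"
    and "three_periodic a b P1 P2 P3"
  defines "c \<equiv> sqrt (a\<^sup>2 - b\<^sup>2)"
    and "\<delta> \<equiv> sqrt (a ^ 4 - a\<^sup>2 * b\<^sup>2 + b ^ 4)"
  defines "f1 \<equiv> Complex (- c) 0"
  shows "perimeter (invert f1 \<rho> P1) (invert f1 \<rho> P2) (invert f1 \<rho> P3)
       = \<rho>\<^sup>2 * sqrt ((8 * a ^ 4 + 4 * a\<^sup>2 * b\<^sup>2 + 2 * b ^ 4) * \<delta> + 8 * a ^ 6 + 3 * a\<^sup>2 * b ^ 4 + 2 * b ^ 6)
           / (a\<^sup>2 * b\<^sup>2)"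
proof -
  have ba: "a > b" and b0: "b > 0" using assms(1,2) .
  have a0: "a > 0" using ba b0 by simp
  have o1: "on_ellipse a b P1" and o2: "on_ellipse a b P2" and o3: "on_ellipse a b P3"
    and d12: "P1 \<noteq> P2" and d23: "P2 \<noteq> P3" and d13: "P1 \<noteq> P3"
    and nb1: "normal_bisects a b P1 P2 P3" and nb2: "normal_bisects a b P2 P3 P1"
    using assms(4) unfolding three_periodic_def by auto
  have r1: "wf a b P1 P2 / norm (P2 - P1) = wf a b P1 P3 / norm (P3 - P1)"
    by (rule ratio_complex[OF a0 b0 o1 o2 o3 d12[symmetric] d13[symmetric] nb1])
  have r2: "wf a b P2 P3 / norm (P3 - P2) = wf a b P2 P1 / norm (P1 - P2)"
    by (rule ratio_complex[OF a0 b0 o2 o3 o1 d23[symmetric] d12 nb2])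
  define k where "k = wf a b P1 P2 / norm (P1 - P2)"
  have np12: "norm (P1 - P2) > 0" using d12 by simp
  have np13: "norm (P1 - P3) > 0" using d13 by simp
  have np23: "norm (P2 - P3) > 0" using d23 by simp
  have wp: "wf a b P1 P2 > 0"
  proof -
    have "(Re P2, Im P2) \<noteq> (Re P1, Im P1)" using d12 by (auto simp: complex_eq_iff)
    thus ?thesis unfolding wf_def
      using w_pos[OF a0 b0 o1[unfolded on_ellipse_def] o2[unfolded on_ellipse_def]] by simp
  qed
  have k0: "k > 0" unfolding k_def using wp np12 by simp
  have w12: "wf a b P1 P2 = k * norm (P1 - P2)" unfolding k_def using np12 by simp
  have w13: "wf a b P1 P3 = k * norm (P1 - P3)"
  proof -
    have "wf a b P1 P3 / norm (P1 - P3) = k" using r1 unfolding k_def by (simp add: norm_minus_commute)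
    thus ?thesis using np13 by (simp add: field_simps)
  qed
  have w23: "wf a b P2 P3 = k * norm (P2 - P3)"
  proof -
    have "wf a b P2 P3 / norm (P2 - P3) = k" using r2 unfolding k_def by (simp add: norm_minus_commute wf_sym)
    thus ?thesis using np23 by (simp add: field_simps)
  qed
  have w21: "wf a b P2 P1 = k * norm (P2 - P1)" using w12 by (simp add: wf_sym norm_minus_commute)
  have w31: "wf a b P3 P1 = k * norm (P3 - P1)" using w13 by (simp add: wf_sym norm_minus_commute)
  have w32: "wf a b P3 P2 = k * norm (P3 - P2)" using w23 by (simp add: wf_sym norm_minus_commute)
  have NA: "False" if "Re X = -a" "Re Y = a" "wf a b X Y = k * norm (X - Y)" "wf a b X Z = k * norm (X - Z)"
    "on_ellipse a b X" "on_ellipse a b Y" "on_ellipse a b Z" "Z \<noteq> X" "Z \<noteq> Y" for X Y Z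
    using no_anti[OF a0 b0 that(5,6,7,1,2,3,4)] that(8,9) by blast
  note na12 = NA[OF _ _ w12 w13 o1 o2 o3 d13[symmetric] d23[symmetric]]
  note na13 = NA[OF _ _ w13 w12 o1 o3 o2 d12[symmetric] d23]
  note na21 = NA[OF _ _ w21 w23 o2 o1 o3 d23[symmetric] d13[symmetric]]
  note na23 = NA[OF _ _ w23 w21 o2 o3 o1 d12 d13]
  note na31 = NA[OF _ _ w31 w32 o3 o1 o2 d23 d12[symmetric]]
  note na32 = NA[OF _ _ w32 w31 o3 o2 o1 d13 d12]
  have "\<exists>e::real. e*e = 1 \<and> Re P1 \<noteq> -e*a \<and> Re P2 \<noteq> -e*a \<and> Re P3 \<noteq> -e*a"
  proof (cases "Re P1 = -a \<or> Re P2 = -a \<or> Re P3 = -a")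
    case False thus ?thesis by (intro exI[of _ 1]) auto
  next
    case True
    have "Re P1 \<noteq> a \<and> Re P2 \<noteq> a \<and> Re P3 \<noteq> a"
      using True na12 na13 na21 na23 na31 na32 a0 by force
    thus ?thesis by (intro exI[of _ "-1"]) auto
  qed
  then obtain e :: real where ee: "e*e = 1" and n1: "Re P1 \<noteq> -e*a" and n2: "Re P2 \<noteq> -e*a"
    and n3: "Re P3 \<noteq> -e*a" by blast
  show ?thesis unfolding f1_def c_def \<delta>_def
    by (rule core_e[OF b0 ba ee k0 o1 o2 o3 d12 d23 d13 n1 n2 n3 w12 w23 w13])
qed

end
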